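(* Let $L$ be a homogeneous second-order Lagrangian with fundamental form $\Theta$ (a 2-form on $\mathcal F^5_{(2)}E$). Then $\Theta$ is projectable to $\mathcal F^4_{(2)}E$ (it is the pull-back of a 2-form on $\mathcal F^4_{(2)}E$), and it is horizontal over $\mathcal F^2_{(2)}E$ (its contraction with any vector field vertical over $\mathcal F^2_{(2)}E$ vanishes).
   Context: Let $E$ be a smooth manifold of dimension $n$ with local coordinates $(u^\alpha)$. For $k\ge 1$, $\mathcal F^k_{(2)}E$ denotes the bundle of $k$-th order 2-frames in $E$ (regular $k$-th order 2-velocities, i.e. $k$-jets at $0$ of maps $\mathbb R^2\to E$ of rank 2 at $0$), with induced coordinates $u^\alpha_{i_1\cdots i_s}$ ($0\le s\le k$, indices in $\{1,2\}$, totally symmetric in the subscripts). Pull-backs along the projections $\mathcal F^l_{(2)}E\to\mathcal F^k_{(2)}E$ are omitted. $\#(i_1\cdots i_s)$ denotes the number of distinct rearrangements of $(i_1,\dots,i_s)$; repeated indices in $\{1,2\}$ are summed. The total derivatives are the vector fields along $\mathcal F^{k+1}_{(2)}E\to\mathcal F^k_{(2)}E$ given by $\mathbf T_i=\sum_{s=0}^k \frac{1}{\#(i_1\cdots i_s)}u^\alpha_{i i_1\cdots i_s}\,\partial/\partial u^\alpha_{i_1\cdots i_s}$, and the vertical endomorphisms are the type $(1,1)$ tensor fields on $\mathcal F^{k+1}_{(2)}E$ given by $S^j=\sum_{s=0}^k \frac{s+1}{\#(i_1\cdots i_s)}\,\partial/\partial u^\alpha_{j i_1\cdots i_s}\otimes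 du^\alpha_{i_1\cdots i_s}$. The $S^i$ commute and $S^{i_1\cdots i_s}$ denotes their composite. On forms, $S^i$ acts as the degree-zero derivation $(S^i\omega)(X_1,\dots,X_r)=\sum_a \omega(X_1,\dots,S^iX_a,\dots,X_r)$ (zero on functions). The fundamental vector fields are $\Delta^{i_1\cdots i_s}_i=S^{i_1\cdots i_s}(\mathbf T_i)$, well-defined vector fields on $\mathcal F^{k+1}_{(2)}E$. Contraction with $\mathbf T_i$ and with $\Delta^{i_1\cdots i_s}_i$ is denoted $i_i$ and $i^{i_1\cdots i_s}_i$; the corresponding Lie derivatives are $d_i=d\,i_i+i_i\,d$ and $d^{i_1\cdots i_s}_i=d\,i^{i_1\cdots i_s}_i+i^{i_1\cdots i_s}_i d$. The $d_i$ commute and $d_{j_1\cdots j_s}$ denotes their composite. A second-order Lagrangian is a smooth function $L$ on (an open subset of) $\mathcal F^2_{(2)}E$; it is homogeneous if $d^i_jL=\delta^i_jL$ and $d^{ik}_jL=0$ for all $i,j,k$. Its Hilbert forms are the 1-forms $\vartheta^i=(S^i-\tfrac12 d_jS^{ji})\,dL$ on $\mathcal F^3_{(2)}E$. Define the operators $P^i_{(1)}=\tfrac14 S^i-\tfrac1{24}d_jS^{ji}+\tfrac1{192}d_{jk}S^{jki}$, mapping 2-forms on $\mathcal F^3_{(2)}E$ to 2-forms on $\mathcal F^5_{(2)}E$. The fundamental form of $L$ is the 2-form $\Theta=P^2_{(1)}d\vartheta^1-P^1_{(1)}d\vartheta^2$ on $\mathcal F^5_{(2)}E$. *)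

theory Defs
  imports "HOL-Analysis.Analysis" "HOL-Library.Groups_Big_Fun"
begin

text \<open>E is represented by one chart with coordinates u^alpha,
  alpha ranging over a finite type 'a (so n = CARD('a)).  A symmetric multi-index
  (i_1 ... i_s) with entries in {1,2} is determined by the pair (p,q) = (number of 1's,
  number of 2's), so the induced coordinate u^alpha_(i_1...i_s) is indexed by (alpha,(p,q)),
  of order p+q.  Since pull-backs along the projections are omitted in the paper, we work
  with points carrying coordinates of all orders; an object "on F^k" is one that only
  involves coordinates of order at most k.\<close>

type_synonym 'a idx = "'a \<times> (nat \<times> nat)"
type_synonym 'a pt = "'a idx \<Rightarrow> real"
text \<open>r-forms: a function of lists of coordinate indices of length r giving the component
  omega(d/du_{m1},...,d/du_{mr}); values on lists of other length are zero.\<close>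
type_synonym 'a form = "'a idx list \<Rightarrow> 'a pt \<Rightarrow> real"
type_synonym 'a vf = "'a idx \<Rightarrow> 'a pt \<Rightarrow> real"

definition jord :: "'a idx \<Rightarrow> nat" where
  "jord m = fst (snd m) + snd (snd m)"

text \<open>appending the index j (j = 1 or 2) to a multi-index\<close>
definition sh :: "nat \<Rightarrow> nat \<times> nat \<Rightarrow> nat \<times> nat" where
  "sh j pq = (if j = 1 then (Suc (fst pq), snd pq) else (fst pq, Suc (snd pq)))"

definition agree_upto :: "nat \<Rightarrow> 'a pt \<Rightarrow> 'a pt \<Rightarrow> bool" where
  "agree_upto k x y \<longleftrightarrow> (\<forall>m. jord m \<le> k \<longrightarrow> x m = y m)"

definition pd :: "'a idx \<Rightarrow> ('a pt \<Rightarrow> real) \<Rightarrow> 'a pt \<Rightarrow> real" where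
  "pd i f x = deriv (\<lambda>t. f (x(i := t))) (x i)"

fun ipd :: "'a idx list \<Rightarrow> ('a pt \<Rightarrow> real) \<Rightarrow> 'a pt \<Rightarrow> real" where
  "ipd [] f = f"
| "ipd (i # is) f = pd i (ipd is f)"

definition smooth_on :: "'a pt set \<Rightarrow> ('a pt \<Rightarrow> real) \<Rightarrow> bool" where
  "smooth_on U f \<longleftrightarrow> (\<forall>is. continuous_on U (ipd is f) \<and>
      (\<forall>x\<in>U. \<forall>i. (\<lambda>t. ipd is f (x(i := t))) differentiable (at (x i))))"

text \<open>a function on (an open subset U of) F^k_(2)E\<close>
definition fun_on :: "nat \<Rightarrow> ('a pt \<Rightarrow> real) \<Rightarrow> bool" where
  "fun_on k f \<longleftrightarrow> (\<forall>x y. agree_upto k x y \<longrightarrow> f x = f y)"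

text \<open>an open subset of F^k_(2)E (regular 2-velocities: rank 2 at order 1)\<close>
definition open_in_frames :: "nat \<Rightarrow> 'a pt set \<Rightarrow> bool" where
  "open_in_frames k U \<longleftrightarrow> open U \<and>
     (\<forall>x y. agree_upto k x y \<longrightarrow> (x \<in> U \<longleftrightarrow> y \<in> U)) \<and>
     (\<forall>x\<in>U. \<forall>a b. (\<forall>\<alpha>. a * x (\<alpha>, (1,0)) + b * x (\<alpha>, (0,1)) = 0) \<longrightarrow> a = 0 \<and> b = 0)"

definition fn0 :: "('a pt \<Rightarrow> real) \<Rightarrow> 'a form" where
  "fn0 f = (\<lambda>is x. if is = [] then f x else 0)"

definition dform :: "'a form \<Rightarrow> 'a form" where
  "dform \<omega> = (\<lambda>is x. \<Sum>j<length is. (-1) ^ j * pd (is ! j) (\<omega> (take j is @ drop (Suc j) is)) x)"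

definition ctr :: "'a vf \<Rightarrow> 'a form \<Rightarrow> 'a form" where
  "ctr X \<omega> = (\<lambda>is x. Sum_any (\<lambda>m. X m x * \<omega> (m # is) x))"

definition lie :: "'a vf \<Rightarrow> 'a form \<Rightarrow> 'a form" where
  "lie X \<omega> = (\<lambda>is x. dform (ctr X \<omega>) is x + ctr X (dform \<omega>) is x)"

text \<open>total derivative T_i: component along d/du^alpha_(i_1..i_s) is u^alpha_(i i_1..i_s)
  (the sum over sequences with weight 1/# collapses to one term per multi-index)\<close>
definition Tvf :: "nat \<Rightarrow> 'a vf" where
  "Tvf i = (\<lambda>m x. x (fst m, sh i (snd m)))"

text \<open>vertical endomorphism S^j: S^j(d/du_n) = (|n|+1) d/du_{n+j};
  Smat j m n is the component of S^j(d/du_n) along d/du_m\<close>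
definition Smat :: "nat \<Rightarrow> 'a idx \<Rightarrow> 'a idx \<Rightarrow> real" where
  "Smat j m n = (if fst m = fst n \<and> snd m = sh j (snd n) then real (jord n + 1) else 0)"

definition Svf :: "nat \<Rightarrow> 'a vf \<Rightarrow> 'a vf" where
  "Svf j X = (\<lambda>m x. Sum_any (\<lambda>n. Smat j m n * X n x))"

text \<open>S^j acting on forms as the degree-zero derivation\<close>
definition Sform :: "nat \<Rightarrow> 'a form \<Rightarrow> 'a form" where
  "Sform j \<omega> = (\<lambda>is x. \<Sum>a<length is. Sum_any (\<lambda>m. Smat j m (is ! a) * \<omega> (is[a := m]) x))"

definition Delta1 :: "nat \<Rightarrow> nat \<Rightarrow> 'a vf" where
  "Delta1 i j = Svf i (Tvf j)"
definition Delta2 :: "nat \<Rightarrow> nat \<Rightarrow> nat \<Rightarrow> 'a vf" where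
  "Delta2 i k j = Svf i (Svf k (Tvf j))"

definition homogeneous :: "'a pt set \<Rightarrow> ('a pt \<Rightarrow> real) \<Rightarrow> bool" where
  "homogeneous U L \<longleftrightarrow>
     (\<forall>i\<in>{1,2}. \<forall>j\<in>{1,2}. \<forall>x\<in>U. lie (Delta1 i j) (fn0 L) [] x = (if i = j then L x else 0)) \<and>
     (\<forall>i\<in>{1,2}. \<forall>k\<in>{1,2}. \<forall>j\<in>{1,2}. \<forall>x\<in>U. lie (Delta2 i k j) (fn0 L) [] x = 0)"

definition hilbert :: "('a pt \<Rightarrow> real) \<Rightarrow> nat \<Rightarrow> 'a form" where
  "hilbert L i = (\<lambda>is x. Sform i (dform (fn0 L)) is x
      - 1/2 * (\<Sum>j\<in>{1,2}. lie (Tvf j) (Sform j (Sform i (dform (fn0 L)))) is x))"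

definition Pop :: "nat \<Rightarrow> 'a form \<Rightarrow> 'a form" where
  "Pop i \<omega> = (\<lambda>is x. 1/4 * Sform i \<omega> is x
      - 1/24 * (\<Sum>j\<in>{1,2}. lie (Tvf j) (Sform j (Sform i \<omega>)) is x)
      + 1/192 * (\<Sum>j\<in>{1,2}. \<Sum>k\<in>{1,2}.
           lie (Tvf j) (lie (Tvf k) (Sform j (Sform k (Sform i \<omega>)))) is x))"

definition fundamental_form :: "('a pt \<Rightarrow> real) \<Rightarrow> 'a form" where
  "fundamental_form L = (\<lambda>is x. Pop 2 (dform (hilbert L 1)) is x - Pop 1 (dform (hilbert L 2)) is x)"

text \<open>omega (on U) is the pull-back of a form on F^k: only d u of order <= k occur and
  the coefficients depend only on coordinates of order <= k\<close>
definition projectable_to :: "nat \<Rightarrow> 'a pt set \<Rightarrow> 'a form \<Rightarrow> bool" where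
  "projectable_to k U \<omega> \<longleftrightarrow>
     (\<forall>x\<in>U. \<forall>is. (\<exists>m\<in>set is. jord m > k) \<longrightarrow> \<omega> is x = 0) \<and>
     (\<forall>x\<in>U. \<forall>y. agree_upto k x y \<longrightarrow> (\<forall>is. \<omega> is x = \<omega> is y))"

definition horizontal_over :: "nat \<Rightarrow> nat \<Rightarrow> 'a pt set \<Rightarrow> 'a form \<Rightarrow> bool" where
  "horizontal_over k l U \<omega> \<longleftrightarrow>
     (\<forall>X::'a vf. (\<forall>m x. (jord m \<le> k \<or> jord m > l) \<longrightarrow> X m x = 0) \<longrightarrow>
        (\<forall>x\<in>U. \<forall>is. ctr X \<omega> is x = 0))"

end

theory Submission imports Defs begin

lemma ipd_append: "ipd (is @ js) f = ipd is (ipd js f)"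
  by (induction "is") auto

lemma pd_const: "pd i (\<lambda>_. c) = (\<lambda>_. 0)"
  by (simp add: pd_def fun_eq_iff)

lemma ipd_const: "ipd (i # is) (\<lambda>_. c) = (\<lambda>_. 0)"
proof (induction "is" arbitrary: i)
  case Nil show ?case by (simp only: ipd.simps pd_const)
next
  case (Cons a "is") then show ?case by (simp only: ipd.simps pd_const)
qed

lemma pd_coord: "pd i (\<lambda>x. x m) = (\<lambda>x. if i = m then 1 else 0)"
  by (auto simp: pd_def fun_eq_iff)

lemma ipd_coord_cases: "ipd is (\<lambda>x. x m) = (\<lambda>x. x m) \<or> (\<exists>c. ipd is (\<lambda>x. x m) = (\<lambda>_. c))"
proof (induction "is")
  case Nil then show ?case by simp
next
  case (Cons a "is")
  then show ?case
  proof
    assume "ipd is (\<lambda>x. x m) = (\<lambda>x. x m)"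
    then show ?thesis by (auto simp: pd_coord)
  next
    assume "\<exists>c. ipd is (\<lambda>x. x m) = (\<lambda>_. c)"
    then show ?thesis by (auto simp: pd_const)
  qed
qed

locale frm =
  fixes U :: "('a::finite) pt set"
  assumes opn: "open U" and sat: "\<And>x y. agree_upto 2 x y \<Longrightarrow> x \<in> U \<longleftrightarrow> y \<in> U"
begin

lemma line_ev: assumes "x \<in> U" shows "eventually (\<lambda>t. x(i:=t) \<in> U) (nhds (x i))"
proof -
  have "\<And>j. continuous_on UNIV (\<lambda>t::real. (x(i:=t)) j)"
    by (case_tac "j = i") (simp_all add: continuous_on_id continuous_on_const)
  then have c: "continuous_on UNIV (\<lambda>t::real. x(i:=t))"
    by (intro continuous_on_coordinatewise_then_product) 
  have "\<And>t. isCont (\<lambda>t::real. x(i:=t)) t" using c by (simp add: continuous_on_eq_continuous_at)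
  then have "open ((\<lambda>t::real. x(i:=t)) -` U)" by (rule continuous_open_vimage[OF opn])
  then have "open {t. x(i:=t) \<in> U}" by (simp add: vimage_def)
  moreover have "x i \<in> {t. x(i:=t) \<in> U}" using assms by simp
  ultimately show ?thesis using eventually_nhds_in_open by fastforce
qed

definition eqU :: "('a pt \<Rightarrow> real) \<Rightarrow> ('a pt \<Rightarrow> real) \<Rightarrow> bool" where
  "eqU f g \<longleftrightarrow> (\<forall>x\<in>U. f x = g x)"

definition lined :: "('a pt \<Rightarrow> real) \<Rightarrow> bool" where
  "lined f \<longleftrightarrow> (\<forall>x\<in>U. \<forall>i. (\<lambda>t. f (x(i:=t))) differentiable (at (x i)))"

definition Dsm :: "('a pt \<Rightarrow> real) \<Rightarrow> bool" where
  "Dsm f \<longleftrightarrow> (\<forall>is. lined (ipd is f))"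

lemma ev_eq: "eqU f g \<Longrightarrow> x \<in> U \<Longrightarrow> eventually (\<lambda>t. f (x(i:=t)) = g (x(i:=t))) (nhds (x i))"
  using line_ev[of x i] unfolding eqU_def by (auto elim: eventually_mono)

lemma pd_cong: "eqU f g \<Longrightarrow> x \<in> U \<Longrightarrow> pd i f x = pd i g x"
  unfolding pd_def by (rule deriv_cong_ev[OF ev_eq]) auto

lemma pd_zero: "eqU f (\<lambda>_. 0) \<Longrightarrow> x \<in> U \<Longrightarrow> pd i f x = 0"
  using pd_cong[of f "\<lambda>_. 0" x i] by (simp add: pd_def)

lemma lined_cong: assumes "eqU f g" "lined f" shows "lined g"
  unfolding lined_def
proof (intro ballI allI)
  fix x i assume x: "x \<in> U"
  have "(\<lambda>t. f (x(i:=t))) differentiable (at (x i))" using assms x unfolding lined_def by blast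
  then have "DERIV (\<lambda>t. f (x(i:=t))) (x i) :> deriv (\<lambda>t. f (x(i:=t))) (x i)"
    by (simp add: DERIV_deriv_iff_real_differentiable)
  then have "DERIV (\<lambda>t. g (x(i:=t))) (x i) :> deriv (\<lambda>t. f (x(i:=t))) (x i)"
    using DERIV_cong_ev[OF refl ev_eq[OF assms(1) x] refl] by simp
  then show "(\<lambda>t. g (x(i:=t))) differentiable (at (x i))"
    using real_differentiable_def by blast
qed

lemma lined_DERIV: "lined f \<Longrightarrow> x \<in> U \<Longrightarrow> DERIV (\<lambda>t. f (x(i:=t))) (x i) :> pd i f x"
  unfolding lined_def pd_def DERIV_deriv_iff_real_differentiable by blast

lemma lined_add: "lined f \<Longrightarrow> lined g \<Longrightarrow> lined (\<lambda>x. f x + g x)"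
  unfolding lined_def by auto
lemma lined_mult: "lined f \<Longrightarrow> lined g \<Longrightarrow> lined (\<lambda>x. f x * g x)"
  unfolding lined_def by auto
lemma lined_const: "lined (\<lambda>_. c)"
  unfolding lined_def by auto

lemma pd_add: assumes "lined f" "lined g" "x \<in> U"
  shows "pd i (\<lambda>x. f x + g x) x = pd i f x + pd i g x"
proof -
  have "DERIV (\<lambda>t. f (x(i:=t)) + g (x(i:=t))) (x i) :> pd i f x + pd i g x"
    using lined_DERIV[OF assms(1,3)] lined_DERIV[OF assms(2,3)] by (intro derivative_intros)
  then show ?thesis unfolding pd_def by (rule DERIV_imp_deriv)
qed

lemma pd_mult: assumes "lined f" "lined g" "x \<in> U"
  shows "pd i (\<lambda>x. f x * g x) x = pd i f x * g x + f x * pd i g x"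
proof -
  have "DERIV (\<lambda>t. f (x(i:=t)) * g (x(i:=t))) (x i) :> pd i f x * g (x(i:=x i)) + pd i g x * f (x(i:= x i))"
    using lined_DERIV[OF assms(1,3)] lined_DERIV[OF assms(2,3)] by (intro derivative_intros)
  then show ?thesis unfolding pd_def by (simp add: DERIV_imp_deriv algebra_simps)
qed

lemma Dsm_lined: "Dsm f \<Longrightarrow> lined f"
  unfolding Dsm_def by (metis ipd.simps(1))

lemma Dsm_pd: "Dsm f \<Longrightarrow> Dsm (pd i f)"
  unfolding Dsm_def by (metis ipd_append ipd.simps)

definition CC :: "('a pt \<Rightarrow> real) set" where
  "CC = {h. \<exists>ps. (\<forall>p\<in>set ps. Dsm (fst p) \<and> Dsm (snd p)) \<and> eqU h (\<lambda>x. \<Sum>p\<leftarrow>ps. fst p x * snd p x)}"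

lemma lined_sumprod: "(\<forall>p\<in>set ps. lined (fst p) \<and> lined (snd p)) \<Longrightarrow> lined (\<lambda>x. \<Sum>p\<leftarrow>ps. fst p x * snd p x)"
proof (induction ps)
  case Nil then show ?case by (simp add: lined_const)
next
  case (Cons a ps) then show ?case by (simp add: lined_add lined_mult)
qed

lemma pd_sumprod: "(\<forall>p\<in>set ps. lined (fst p) \<and> lined (snd p)) \<Longrightarrow> x \<in> U \<Longrightarrow>
   pd i (\<lambda>x. \<Sum>p\<leftarrow>ps. fst p x * snd p x) x = (\<Sum>p\<leftarrow>ps. pd i (fst p) x * snd p x + fst p x * pd i (snd p) x)"
proof (induction ps)
  case Nil then show ?case by (simp add: pd_def)
next
  case (Cons a ps)
  have "pd i (\<lambda>x. \<Sum>p\<leftarrow>a # ps. fst p x * snd p x) x = pd i (\<lambda>x. fst a x * snd a x + (\<Sum>p\<leftarrow>ps. fst p x * snd p x)) x"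
    by simp
  also have "\<dots> = pd i (\<lambda>x. fst a x * snd a x) x + pd i (\<lambda>x. \<Sum>p\<leftarrow>ps. fst p x * snd p x) x"
    using Cons by (intro pd_add) (auto intro: lined_mult lined_sumprod)
  finally show ?case using Cons by (simp add: pd_mult)
qed

lemma sum_list_concat_pairs: "(\<Sum>p\<leftarrow>concat (map (\<lambda>p. [F p, G p]) ps). fst p x * snd p x) =
   (\<Sum>p\<leftarrow>ps. fst (F p) x * snd (F p) x + fst (G p) x * snd (G p) x)"
  by (induction ps) (auto simp: add.assoc)

lemma eqU_sym: "eqU f g \<Longrightarrow> eqU g f"
  unfolding eqU_def by simp

lemma CC_lined: assumes "h \<in> CC" shows "lined h"
proof -
  obtain ps where ps: "\<forall>p\<in>set ps. Dsm (fst p) \<and> Dsm (snd p)" "eqU h (\<lambda>x. \<Sum>p\<leftarrow>ps. fst p x * snd p x)"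
    using assms unfolding CC_def by blast
  have "lined (\<lambda>x. \<Sum>p\<leftarrow>ps. fst p x * snd p x)"
    by (rule lined_sumprod) (use ps(1) Dsm_lined in blast)
  then show ?thesis using lined_cong[OF eqU_sym[OF ps(2)]] by blast
qed

lemma CC_pd: assumes "h \<in> CC" shows "pd i h \<in> CC"
proof -
  obtain ps where ps: "\<forall>p\<in>set ps. Dsm (fst p) \<and> Dsm (snd p)" "eqU h (\<lambda>x. \<Sum>p\<leftarrow>ps. fst p x * snd p x)"
    using assms unfolding CC_def by blast
  define qs where "qs = concat (map (\<lambda>p. [(pd i (fst p), snd p), (fst p, pd i (snd p))]) ps)"
  have "\<forall>p\<in>set qs. Dsm (fst p) \<and> Dsm (snd p)" using ps(1) by (auto simp: qs_def Dsm_pd)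
  moreover have "eqU (pd i h) (\<lambda>x. \<Sum>p\<leftarrow>qs. fst p x * snd p x)"
    unfolding eqU_def
  proof
    fix x assume x: "x \<in> U"
    have "pd i h x = pd i (\<lambda>x. \<Sum>p\<leftarrow>ps. fst p x * snd p x) x" using pd_cong[OF ps(2) x] .
    also have "\<dots> = (\<Sum>p\<leftarrow>ps. pd i (fst p) x * snd p x + fst p x * pd i (snd p) x)"
      using ps(1) x by (intro pd_sumprod) (auto intro: Dsm_lined)
    also have "\<dots> = (\<Sum>p\<leftarrow>qs. fst p x * snd p x)" unfolding qs_def sum_list_concat_pairs by simp
    finally show "pd i h x = (\<Sum>p\<leftarrow>qs. fst p x * snd p x)" .
  qed
  ultimately show ?thesis unfolding CC_def by blast
qed

lemma CC_Dsm: assumes "h \<in> CC" shows "Dsm h"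
proof -
  have "ipd is h \<in> CC" for "is" by (induction "is") (auto simp: assms CC_pd)
  then show ?thesis unfolding Dsm_def using CC_lined by blast
qed

lemma Dsm_const: "Dsm (\<lambda>_. c)"
  unfolding Dsm_def proof
  fix "is" show "lined (ipd is (\<lambda>_. c))" by (cases "is") (simp_all only: ipd_const lined_const ipd.simps(1))
qed

lemma lined_coord: "lined (\<lambda>x. x m)"
  unfolding lined_def proof (intro ballI allI)
  fix x :: "'a pt" and i show "(\<lambda>t. (x(i:=t)) m) differentiable at (x i)"
    by (cases "i = m") auto
qed

lemma Dsm_coord: "Dsm (\<lambda>x. x m)"
  unfolding Dsm_def proof
  fix "is" show "lined (ipd is (\<lambda>x. x m))"
    using ipd_coord_cases[of "is" m] lined_coord lined_const by metis
qed

lemma Dsm_mult: "Dsm f \<Longrightarrow> Dsm g \<Longrightarrow> Dsm (\<lambda>x. f x * g x)"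
  by (rule CC_Dsm) (auto simp: CC_def eqU_def intro!: exI[of _ "[(f,g)]"])

lemma Dsm_add: "Dsm f \<Longrightarrow> Dsm g \<Longrightarrow> Dsm (\<lambda>x. f x + g x)"
  by (rule CC_Dsm) (auto simp: CC_def eqU_def Dsm_const intro!: exI[of _ "[(f,\<lambda>_. 1), (\<lambda>_. 1, g)]"])

lemma Dsm_cong: "Dsm f \<Longrightarrow> eqU f g \<Longrightarrow> Dsm g"
  by (rule CC_Dsm) (auto simp: CC_def eqU_def Dsm_const intro!: exI[of _ "[(f,\<lambda>_. 1)]"])

lemma Dsm_cmult: "Dsm f \<Longrightarrow> Dsm (\<lambda>x. c * f x)"
  using Dsm_mult[OF Dsm_const] by blast

lemma Dsm_diff: "Dsm f \<Longrightarrow> Dsm g \<Longrightarrow> Dsm (\<lambda>x. f x - g x)"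
  using Dsm_add[of f "\<lambda>x. (-1) * g x"] Dsm_cmult[of g "-1"] by simp

lemma Dsm_sum: "finite A \<Longrightarrow> (\<And>a. a \<in> A \<Longrightarrow> Dsm (F a)) \<Longrightarrow> Dsm (\<lambda>x. \<Sum>a\<in>A. F a x)"
  by (induction A rule: finite_induct) (auto simp: Dsm_const Dsm_add)


lemma lined_sum: "finite A \<Longrightarrow> (\<And>a. a \<in> A \<Longrightarrow> lined (F a)) \<Longrightarrow> lined (\<lambda>x. \<Sum>a\<in>A. F a x)"
  by (induction A rule: finite_induct) (auto simp: lined_const lined_add)

lemma pd_sum: "finite A \<Longrightarrow> (\<And>a. a \<in> A \<Longrightarrow> lined (F a)) \<Longrightarrow> x \<in> U \<Longrightarrow>
   pd i (\<lambda>x. \<Sum>a\<in>A. F a x) x = (\<Sum>a\<in>A. pd i (F a) x)"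
proof (induction A rule: finite_induct)
  case empty then show ?case by (simp add: pd_const)
next
  case (insert a A)
  have "pd i (\<lambda>x. \<Sum>a\<in>insert a A. F a x) x = pd i (\<lambda>x. F a x + (\<Sum>a\<in>A. F a x)) x"
    using insert by simp
  also have "\<dots> = pd i (F a) x + pd i (\<lambda>x. \<Sum>a\<in>A. F a x) x"
    using insert by (intro pd_add lined_sum) auto
  finally show ?case using insert by simp
qed

lemma pd_cmult: "lined f \<Longrightarrow> x \<in> U \<Longrightarrow> pd i (\<lambda>x. c * f x) x = c * pd i f x"
  using pd_mult[OF lined_const, of f x i c] by (simp add: pd_const)

lemma pd_diff: "lined f \<Longrightarrow> lined g \<Longrightarrow> x \<in> U \<Longrightarrow> pd i (\<lambda>x. f x - g x) x = pd i f x - pd i g x"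
  using pd_add[of f "\<lambda>x. (-1) * g x" x i] pd_cmult[of g x i "-1"] lined_mult[OF lined_const, of g "-1"]
  by simp

subsection \<open>dependence\<close>

definition dep :: "nat \<Rightarrow> ('a pt \<Rightarrow> real) \<Rightarrow> bool" where
  "dep k f \<longleftrightarrow> (\<forall>x\<in>U. \<forall>y. agree_upto k x y \<longrightarrow> f x = f y)"

lemma agree_mono: "agree_upto k x y \<Longrightarrow> j \<le> k \<Longrightarrow> agree_upto j x y"
  unfolding agree_upto_def by auto

lemma satk: "2 \<le> k \<Longrightarrow> agree_upto k x y \<Longrightarrow> x \<in> U \<Longrightarrow> y \<in> U"
  using sat agree_mono by blast

lemma pd_dep_high: assumes "dep k f" "k < jord i" "x \<in> U" shows "pd i f x = 0"
proof -
  have "\<And>t. f (x(i:=t)) = f x"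
    using assms unfolding dep_def agree_upto_def by (metis fun_upd_other not_le)
  then show ?thesis by (simp add: pd_def)
qed

lemma dep_pd: assumes k: "2 \<le> k" and d: "dep k f" shows "dep k (pd i f)"
  unfolding dep_def
proof (intro ballI allI impI)
  fix x y assume x: "x \<in> U" and a: "agree_upto k x y"
  have y: "y \<in> U" using satk[OF k a x] .
  show "pd i f x = pd i f y"
  proof (cases "k < jord i")
    case True then show ?thesis using pd_dep_high[OF d True] x y by simp
  next
    case False
    then have "jord i \<le> k" by simp
    then have xi: "x i = y i" using a unfolding agree_upto_def by blast
    have "eventually (\<lambda>t. f (x(i:=t)) = f (y(i:=t))) (nhds (x i))"
      using line_ev[OF x, of i]
    proof (rule eventually_mono)
      fix t assume "x(i:=t) \<in> U"
      moreover have "agree_upto k (x(i:=t)) (y(i:=t))" using a unfolding agree_upto_def by auto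
      ultimately show "f (x(i:=t)) = f (y(i:=t))" using d unfolding dep_def by blast
    qed
    then show ?thesis unfolding pd_def by (rule deriv_cong_ev) (simp add: xi)
  qed
qed

lemma dep_const: "dep k (\<lambda>_. c)" by (simp add: dep_def)
lemma dep_coord: "jord m \<le> k \<Longrightarrow> dep k (\<lambda>x. x m)" unfolding dep_def agree_upto_def by blast
lemma dep_add: "dep k f \<Longrightarrow> dep k g \<Longrightarrow> dep k (\<lambda>x. f x + g x)" by (simp add: dep_def)
lemma dep_mult: "dep k f \<Longrightarrow> dep k g \<Longrightarrow> dep k (\<lambda>x. f x * g x)" by (simp add: dep_def)
lemma dep_diff: "dep k f \<Longrightarrow> dep k g \<Longrightarrow> dep k (\<lambda>x. f x - g x)" by (simp add: dep_def)
lemma dep_cmult: "dep k f \<Longrightarrow> dep k (\<lambda>x. c * f x)" by (simp add: dep_def)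
lemma dep_mono: "dep j f \<Longrightarrow> j \<le> k \<Longrightarrow> dep k f"
  unfolding dep_def using agree_mono by blast
lemma dep_sum: "finite A \<Longrightarrow> (\<And>a. a \<in> A \<Longrightarrow> dep k (F a)) \<Longrightarrow> dep k (\<lambda>x. \<Sum>a\<in>A. F a x)"
  by (induction A rule: finite_induct) (auto simp: dep_const dep_add)
lemma dep_cong: "2 \<le> k \<Longrightarrow> dep k f \<Longrightarrow> eqU f g \<Longrightarrow> dep k g"
  unfolding dep_def eqU_def using satk by metis
lemma dep_zeroU: "2 \<le> k \<Longrightarrow> eqU f (\<lambda>_. 0) \<Longrightarrow> dep k f"
  unfolding dep_def eqU_def using satk by metis


definition wt :: "'a idx list \<Rightarrow> nat" where "wt is = sum_list (map jord is)"
definition fD :: "'a form \<Rightarrow> bool" where "fD \<omega> \<longleftrightarrow> (\<forall>is. Dsm (\<omega> is))"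
definition supp :: "nat \<Rightarrow> 'a form \<Rightarrow> bool" where
  "supp s \<omega> \<longleftrightarrow> (\<forall>is. \<forall>x\<in>U. s < wt is \<longrightarrow> \<omega> is x = 0)"
definition depw :: "nat \<Rightarrow> nat \<Rightarrow> 'a form \<Rightarrow> bool" where
  "depw w k \<omega> \<longleftrightarrow> (\<forall>is. w \<le> wt is \<longrightarrow> dep k (\<omega> is))"

definition rs :: "nat \<Rightarrow> 'a idx \<Rightarrow> 'a idx" where "rs j n = (fst n, sh j (snd n))"

lemma jord_rs: "jord (rs j n) = Suc (jord n)"
  by (simp add: rs_def jord_def sh_def)

lemma Smat_eq: "Smat j m n = (if m = rs j n then real (jord n + 1) else 0)"
  by (cases m; cases n) (auto simp: Smat_def rs_def)

lemma Sform_eq: "Sform j \<omega> is x = (\<Sum>a<length is. real (jord (is!a) + 1) * \<omega> (is[a := rs j (is!a)]) x)"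
proof -
  have "\<And>a. Sum_any (\<lambda>m. Smat j m (is ! a) * \<omega> (is[a := m]) x) =
      real (jord (is!a) + 1) * \<omega> (is[a := rs j (is!a)]) x"
  proof -
    fix a
    have "Sum_any (\<lambda>m. Smat j m (is ! a) * \<omega> (is[a := m]) x) =
       Sum_any (\<lambda>m. if m = rs j (is!a) then real (jord (is!a) + 1) * \<omega> (is[a := m]) x else 0)"
      by (intro arg_cong[where f=Sum_any] ext) (simp add: Smat_eq)
    also have "\<dots> = real (jord (is!a) + 1) * \<omega> (is[a := rs j (is!a)]) x"
      by (rule Sum_any.delta)
    finally show "?thesis a" .
  qed
  then show ?thesis unfolding Sform_def by simp
qed

lemma wt_upd: "a < length is \<Longrightarrow> wt (is[a:=m]) + jord (is!a) = wt is + jord m"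
proof (induction "is" arbitrary: a)
  case Nil then show ?case by simp
next
  case (Cons b "is") then show ?case by (cases a) (auto simp: wt_def)
qed

lemma wt_raise: "a < length is \<Longrightarrow> wt (is[a := rs j (is!a)]) = Suc (wt is)"
  using wt_upd[of a "is" "rs j (is!a)"] by (simp add: jord_rs)

lemma Sform_fD: "fD \<omega> \<Longrightarrow> fD (Sform j \<omega>)"
  unfolding fD_def
proof
  fix "is" assume "\<forall>is. Dsm (\<omega> is)"
  then have "Dsm (\<lambda>x. \<Sum>a<length is. real (jord (is!a) + 1) * \<omega> (is[a := rs j (is!a)]) x)"
    by (intro Dsm_sum Dsm_cmult) auto
  moreover have "Sform j \<omega> is = (\<lambda>x. \<Sum>a<length is. real (jord (is!a) + 1) * \<omega> (is[a := rs j (is!a)]) x)"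
    by (simp add: fun_eq_iff Sform_eq)
  ultimately show "Dsm (Sform j \<omega> is)" by simp
qed

lemma Sform_supp: "supp (Suc s) \<omega> \<Longrightarrow> supp s (Sform j \<omega>)"
  unfolding supp_def Sform_eq using wt_raise by (simp add: sum.neutral)

lemma Sform_depw: "depw (Suc w) k \<omega> \<Longrightarrow> depw w k (Sform j \<omega>)"
  unfolding depw_def
proof (intro allI impI)
  fix "is" assume d: "\<forall>is. Suc w \<le> wt is \<longrightarrow> dep k (\<omega> is)" and w: "w \<le> wt is"
  have "dep k (\<lambda>x. \<Sum>a<length is. real (jord (is!a) + 1) * \<omega> (is[a := rs j (is!a)]) x)"
    using d w wt_raise by (intro dep_sum dep_cmult) auto
  moreover have "Sform j \<omega> is = (\<lambda>x. \<Sum>a<length is. real (jord (is!a) + 1) * \<omega> (is[a := rs j (is!a)]) x)"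
    by (simp add: fun_eq_iff Sform_eq)
  ultimately show "dep k (Sform j \<omega> is)" by simp
qed

lemma depw_mono: "depw w k \<omega> \<Longrightarrow> w \<le> w' \<Longrightarrow> k \<le> k' \<Longrightarrow> depw w' k' \<omega>"
  unfolding depw_def by (meson dep_mono le_trans)

lemma supp_mono: "supp s \<omega> \<Longrightarrow> s \<le> s' \<Longrightarrow> supp s' \<omega>"
  unfolding supp_def by auto

lemma Sform_depw0: "depw 0 k \<omega> \<Longrightarrow> depw 0 k (Sform j \<omega>)"
proof -
  assume "depw 0 k \<omega>"
  then have "depw (Suc 0) k \<omega>" by (rule depw_mono) simp_all
  then show ?thesis by (rule Sform_depw)
qed


subsection \<open>Lie derivative along total derivative\<close>

definition lowerable :: "nat \<Rightarrow> 'a idx \<Rightarrow> bool" where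
  "lowerable j c \<longleftrightarrow> (if j = 1 then 0 < fst (snd c) else 0 < snd (snd c))"
definition lw :: "nat \<Rightarrow> 'a idx \<Rightarrow> 'a idx" where
  "lw j c = (fst c, if j = 1 then (fst (snd c) - 1, snd (snd c)) else (fst (snd c), snd (snd c) - 1))"
definition dl :: "nat \<Rightarrow> 'b list \<Rightarrow> 'b list" where "dl p xs = take p xs @ drop (Suc p) xs"
definition MN :: "nat \<Rightarrow> 'a idx set" where "MN N = {m. jord m \<le> N}"

lemma rs_eq_iff: "(c = rs j m) \<longleftrightarrow> (lowerable j c \<and> m = lw j c)"
  by (cases c; cases m) (auto simp: rs_def sh_def lowerable_def lw_def)

lemma jord_lw: "lowerable j c \<Longrightarrow> Suc (jord (lw j c)) = jord c"
  by (cases c) (auto simp: lowerable_def lw_def jord_def)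

lemma wt_cons: "wt (m # xs) = jord m + wt xs" by (simp add: wt_def)

lemma wt_dl: assumes "p < length xs" shows "wt (dl p xs) + jord (xs!p) = wt xs"
proof -
  have "wt xs = wt (take p xs @ xs!p # drop (Suc p) xs)" using id_take_nth_drop[OF assms] by metis
  then show ?thesis by (simp add: wt_def dl_def)
qed

lemma wt_lower: "p < length xs \<Longrightarrow> lowerable j (xs!p) \<Longrightarrow> Suc (wt (lw j (xs!p) # dl p xs)) = wt xs"
  using wt_dl[of p xs] jord_lw[of j "xs!p"] by (simp add: wt_cons)

lemma finite_MN: "finite (MN N)"
proof -
  have "MN N \<subseteq> UNIV \<times> ({..N} \<times> {..N})" by (auto simp: MN_def jord_def)
  then show ?thesis by (rule finite_subset) auto
qed

lemma ctr_T_eq: assumes "supp N \<omega>" "x \<in> U"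
  shows "ctr (Tvf j) \<omega> js x = (\<Sum>m\<in>MN N. x (rs j m) * \<omega> (m # js) x)"
proof -
  have "{m. x (fst m, sh j (snd m)) * \<omega> (m # js) x \<noteq> 0} \<subseteq> MN N"
  proof
    fix m assume m: "m \<in> {m. x (fst m, sh j (snd m)) * \<omega> (m # js) x \<noteq> 0}"
    show "m \<in> MN N"
    proof (rule ccontr)
      assume "m \<notin> MN N"
      then have "N < wt (m # js)" by (simp add: MN_def wt_cons)
      then have "\<omega> (m # js) x = 0" using assms unfolding supp_def by blast
      then show False using m by simp
    qed
  qed
  then show ?thesis unfolding ctr_def Tvf_def rs_def by (simp add: Sum_any.expand_superset[OF finite_MN])
qed

lemma ctr_T_eqU: "supp N \<omega> \<Longrightarrow> eqU (ctr (Tvf j) \<omega> js) (\<lambda>x. \<Sum>m\<in>MN N. x (rs j m) * \<omega> (m # js) x)"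
  unfolding eqU_def using ctr_T_eq by blast

lemma dform_eq: "dform \<omega> is x = (\<Sum>p<length is. (-1)^p * pd (is!p) (\<omega> (dl p is)) x)"
  by (simp add: dform_def dl_def)

lemma dform_cons: "dform \<omega> (m # is) x = pd m (\<omega> is) x - (\<Sum>p<length is. (-1)^p * pd (is!p) (\<omega> (m # dl p is)) x)"
proof -
  have "dform \<omega> (m # is) x = (\<Sum>q<Suc (length is). (-1)^q * pd ((m # is)!q) (\<omega> (dl q (m # is))) x)"
    by (simp add: dform_eq)
  also have "\<dots> = pd m (\<omega> is) x + (\<Sum>p<length is. (-1)^(Suc p) * pd (is!p) (\<omega> (m # dl p is)) x)"
    by (subst sum.lessThan_Suc_shift) (simp add: dl_def)
  also have "\<dots> = pd m (\<omega> is) x - (\<Sum>p<length is. (-1)^p * pd (is!p) (\<omega> (m # dl p is)) x)"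
    by (simp add: sum_negf)
  finally show ?thesis .
qed

lemma lowsum: assumes "supp N \<omega>" "x \<in> U"
  shows "(\<Sum>m\<in>MN N. (if c = rs j m then 1 else 0) * \<omega> (m # js) x) = (if lowerable j c then \<omega> (lw j c # js) x else 0)"
proof (cases "lowerable j c")
  case True
  have "(\<Sum>m\<in>MN N. (if c = rs j m then 1 else 0) * \<omega> (m # js) x) = (\<Sum>m\<in>MN N. if m = lw j c then \<omega> (m # js) x else 0)"
    using True by (intro sum.cong) (auto simp: rs_eq_iff)
  also have "\<dots> = (if lw j c \<in> MN N then \<omega> (lw j c # js) x else 0)" by (simp add: sum.delta[OF finite_MN])
  also have "\<dots> = \<omega> (lw j c # js) x"
  proof (cases "lw j c \<in> MN N")
    case False
    then have "N < wt (lw j c # js)" by (simp add: MN_def wt_cons)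
    then show ?thesis using assms False unfolding supp_def by auto
  qed simp
  finally show ?thesis using True by simp
next
  case False then show ?thesis by (auto simp: rs_eq_iff intro: sum.neutral)
qed

definition lieF :: "nat \<Rightarrow> nat \<Rightarrow> 'a form \<Rightarrow> 'a form" where
  "lieF N j \<omega> = (\<lambda>is x. (\<Sum>m\<in>MN N. x (rs j m) * pd m (\<omega> is) x) +
      (\<Sum>p<length is. (-1)^p * (if lowerable j (is!p) then \<omega> (lw j (is!p) # dl p is) x else 0)))"

lemma lie_formula: assumes fd: "fD \<omega>" and sp: "supp N \<omega>" and dp: "depw 0 N \<omega>" and x: "x \<in> U"
  shows "lie (Tvf j) \<omega> is x = lieF N j \<omega> is x"
proof -
  define B where "B p m = x (rs j m) * pd (is!p) (\<omega> (m # dl p is)) x" for p m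
  define A where "A p = (if lowerable j (is!p) then \<omega> (lw j (is!p) # dl p is) x else 0)" for p
  have lin: "\<And>js. lined (\<omega> js)" using fd Dsm_lined unfolding fD_def by blast
  have d1: "dform (ctr (Tvf j) \<omega>) is x = (\<Sum>p<length is. (-1)^p * (A p + (\<Sum>m\<in>MN N. B p m)))"
  proof -
    have "pd (is!p) (ctr (Tvf j) \<omega> (dl p is)) x = A p + (\<Sum>m\<in>MN N. B p m)" for p
    proof -
      have "pd (is!p) (ctr (Tvf j) \<omega> (dl p is)) x = pd (is!p) (\<lambda>x. \<Sum>m\<in>MN N. x (rs j m) * \<omega> (m # dl p is) x) x"
        by (rule pd_cong[OF ctr_T_eqU[OF sp] x])
      also have "\<dots> = (\<Sum>m\<in>MN N. pd (is!p) (\<lambda>x. x (rs j m) * \<omega> (m # dl p is) x) x)"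
        by (rule pd_sum[OF finite_MN _ x]) (intro lined_mult lined_coord lin)
      also have "\<dots> = (\<Sum>m\<in>MN N. (if is!p = rs j m then 1 else 0) * \<omega> (m # dl p is) x + B p m)"
        by (intro sum.cong refl) (simp add: pd_mult[OF lined_coord lin x] pd_coord B_def)
      also have "\<dots> = A p + (\<Sum>m\<in>MN N. B p m)" by (simp add: sum.distrib lowsum[OF sp x] A_def)
      finally show ?thesis .
    qed
    then show ?thesis by (simp add: dform_eq)
  qed
  have d2: "ctr (Tvf j) (dform \<omega>) is x = (\<Sum>m\<in>MN N. x (rs j m) * pd m (\<omega> is) x) - (\<Sum>m\<in>MN N. \<Sum>p<length is. (-1)^p * B p m)"
  proof -
    have "{m. x (fst m, sh j (snd m)) * dform \<omega> (m # is) x \<noteq> 0} \<subseteq> MN N"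
    proof
      fix m assume "m \<in> {m. x (fst m, sh j (snd m)) * dform \<omega> (m # is) x \<noteq> 0}"
      then have nz: "dform \<omega> (m # is) x \<noteq> 0" by simp
      show "m \<in> MN N"
      proof (rule ccontr)
        assume "m \<notin> MN N" then have N: "N < jord m" by (simp add: MN_def)
        have "pd m (\<omega> is) x = 0" using pd_dep_high[OF _ N x] dp unfolding depw_def by simp
        moreover have "pd (is!p) (\<omega> (m # dl p is)) x = 0" for p
          by (rule pd_zero[OF _ x]) (use sp N in \<open>auto simp: eqU_def supp_def wt_cons\<close>)
        ultimately have "dform \<omega> (m # is) x = 0" by (simp add: dform_cons)
        with nz show False by simp
      qed
    qed
    then have "ctr (Tvf j) (dform \<omega>) is x = (\<Sum>m\<in>MN N. x (rs j m) * dform \<omega> (m # is) x)"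
      unfolding ctr_def Tvf_def rs_def by (simp add: Sum_any.expand_superset[OF finite_MN])
    also have "\<dots> = (\<Sum>m\<in>MN N. x (rs j m) * pd m (\<omega> is) x - (\<Sum>p<length is. (-1)^p * B p m))"
      by (intro sum.cong refl) (simp add: dform_cons B_def right_diff_distrib sum_distrib_left algebra_simps)
    also have "\<dots> = (\<Sum>m\<in>MN N. x (rs j m) * pd m (\<omega> is) x) - (\<Sum>m\<in>MN N. \<Sum>p<length is. (-1)^p * B p m)"
      by (simp add: sum_subtractf)
    finally show ?thesis .
  qed
  have e: "(\<Sum>p<length is. (-1)^p * (A p + (\<Sum>m\<in>MN N. B p m))) =
     (\<Sum>p<length is. (-1)^p * A p) + (\<Sum>m\<in>MN N. \<Sum>p<length is. (-1)^p * B p m)"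
    by (simp add: distrib_left sum.distrib sum_distrib_left) (rule sum.swap)
  show ?thesis unfolding lie_def lieF_def d1 d2 e by (simp add: A_def)
qed

lemma lie_eqU: "fD \<omega> \<Longrightarrow> supp N \<omega> \<Longrightarrow> depw 0 N \<omega> \<Longrightarrow> eqU (lie (Tvf j) \<omega> is) (lieF N j \<omega> is)"
  unfolding eqU_def using lie_formula by blast

lemma dep_if0: "dep k f \<Longrightarrow> dep k (\<lambda>x. if P then f x else 0)"
  by (cases P) (simp_all add: dep_const)
lemma Dsm_if0: "Dsm f \<Longrightarrow> Dsm (\<lambda>x. if P then f x else 0)"
  by (cases P) (simp_all add: Dsm_const)

lemma lieF_Dsm: "fD \<omega> \<Longrightarrow> Dsm (lieF N j \<omega> is)"
  unfolding lieF_def fD_def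
  by (intro Dsm_add Dsm_sum finite_MN Dsm_mult Dsm_coord Dsm_pd Dsm_cmult Dsm_if0) auto

lemma lie_fD: "fD \<omega> \<Longrightarrow> supp N \<omega> \<Longrightarrow> depw 0 N \<omega> \<Longrightarrow> fD (lie (Tvf j) \<omega>)"
  unfolding fD_def[of "lie _ _"] using lieF_Dsm lie_eqU Dsm_cong eqU_def by (metis (no_types))

lemma lie_supp: assumes "fD \<omega>" "supp N \<omega>" "depw 0 N \<omega>" "supp s \<omega>"
  shows "supp (Suc s) (lie (Tvf j) \<omega>)"
  unfolding supp_def
proof (intro allI ballI impI)
  fix "is" x assume x: "x \<in> U" and w: "Suc s < wt is"
  have "pd m (\<omega> is) x = 0" for m
    by (rule pd_zero[OF _ x]) (use assms(4) w in \<open>auto simp: eqU_def supp_def\<close>)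
  moreover have "(if lowerable j (is!p) then \<omega> (lw j (is!p) # dl p is) x else 0) = 0" if "p < length is" for p
    using wt_lower[OF that, of j] assms(4) w x unfolding supp_def by auto
  ultimately show "lie (Tvf j) \<omega> is x = 0"
    using lie_formula[OF assms(1-3) x] by (simp add: lieF_def)
qed

lemma lie_dep: assumes "fD \<omega>" "supp N \<omega>" "depw 0 N \<omega>" "2 \<le> N"
  shows "depw 0 (Suc N) (lie (Tvf j) \<omega>)"
  unfolding depw_def
proof (intro allI impI)
  fix "is" :: "'a idx list"
  have d: "\<And>js. dep N (\<omega> js)" using assms(3) unfolding depw_def by auto
  have d1: "dep (Suc N) (\<omega> js)" for js using dep_mono[OF d, where k="Suc N"] by simp
  have d2: "dep (Suc N) (pd m (\<omega> js))" for js m using dep_mono[OF dep_pd[OF assms(4) d], where k="Suc N"] by simp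
  have d3: "dep (Suc N) (\<lambda>x. x (rs j m))" if "m \<in> MN N" for m
    using that by (intro dep_coord) (simp add: MN_def jord_rs)
  have "dep (Suc N) (lieF N j \<omega> is)"
    unfolding lieF_def
    by (intro dep_add dep_sum finite_MN dep_mult dep_cmult dep_if0 d1 d2 d3 finite_lessThan)
  moreover have "2 \<le> Suc N" using assms(4) by simp
  ultimately show "dep (Suc N) (lie (Tvf j) \<omega> is)"
    using dep_cong[OF _ _ eqU_sym[OF lie_eqU[OF assms(1-3)]]] by blast
qed

lemma lie_depw_high: assumes "fD \<omega>" "supp N \<omega>" "depw 0 N \<omega>" "supp s \<omega>" "depw s k \<omega>" "2 \<le> k"
  shows "depw (Suc s) k (lie (Tvf j) \<omega>)"
  unfolding depw_def
proof (intro allI impI)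
  fix "is" :: "'a idx list" assume w: "Suc s \<le> wt is"
  define G where "G = (\<lambda>x. \<Sum>p<length is. (-1)^p * (if lowerable j (is!p) then \<omega> (lw j (is!p) # dl p is) x else 0))"
  have "dep k G"
    unfolding G_def
  proof (intro dep_sum dep_cmult)
    fix p assume p: "p \<in> {..<length is}"
    show "dep k (\<lambda>x. if lowerable j (is!p) then \<omega> (lw j (is!p) # dl p is) x else 0)"
    proof (cases "lowerable j (is!p)")
      case True
      then have "s \<le> wt (lw j (is!p) # dl p is)" using wt_lower[of p "is" j] p w by simp
      then show ?thesis using assms(5) True unfolding depw_def by simp
    qed (simp add: dep_const)
  qed simp
  moreover have "eqU G (lie (Tvf j) \<omega> is)"
    unfolding eqU_def
  proof
    fix x assume x: "x \<in> U"
    have "pd m (\<omega> is) x = 0" for m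
      by (rule pd_zero[OF _ x]) (use assms(4) w in \<open>auto simp: eqU_def supp_def\<close>)
    then show "G x = lie (Tvf j) \<omega> is x"
      using lie_formula[OF assms(1-3) x] by (simp add: lieF_def G_def)
  qed
  ultimately show "dep k (lie (Tvf j) \<omega> is)" using dep_cong assms(6) by blast
qed

lemma lie_depd: assumes "fD \<omega>" "supp N \<omega>" "depw 0 N \<omega>" "2 \<le> N" "jord a = Suc N"
  shows "dep N (pd a (lie (Tvf j) \<omega> is))"
proof -
  have d: "\<And>js. dep N (\<omega> js)" using assms(3) unfolding depw_def by auto
  have lin: "\<And>js. lined (\<omega> js)" using assms(1) Dsm_lined unfolding fD_def by blast
  have linp: "\<And>js m. lined (pd m (\<omega> js))" using assms(1) Dsm_lined Dsm_pd unfolding fD_def by blast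
  define G where "G = (\<lambda>x. \<Sum>m\<in>MN N. (if a = rs j m then 1 else 0) * pd m (\<omega> is) x)"
  have "dep N G" unfolding G_def using d assms(4) by (intro dep_sum finite_MN dep_cmult dep_pd) auto
  moreover have "eqU G (pd a (lie (Tvf j) \<omega> is))"
    unfolding eqU_def
  proof
    fix x assume x: "x \<in> U"
    have hi: "N < jord a" using assms(5) by simp
    have "pd a (lie (Tvf j) \<omega> is) x = pd a (lieF N j \<omega> is) x"
      by (rule pd_cong[OF lie_eqU[OF assms(1-3)] x])
    also have "\<dots> = (\<Sum>m\<in>MN N. pd a (\<lambda>x. x (rs j m) * pd m (\<omega> is) x) x) +
        (\<Sum>p<length is. pd a (\<lambda>x. (-1)^p * (if lowerable j (is!p) then \<omega> (lw j (is!p) # dl p is) x else 0)) x)"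
      (is "_ = ?rhs")
    proof -
      have l1: "lined (\<lambda>x. \<Sum>m\<in>MN N. x (rs j m) * pd m (\<omega> is) x)"
        by (intro lined_sum finite_MN lined_mult lined_coord linp)
      have l2: "lined (\<lambda>x. \<Sum>p<length is. (-1)^p * (if lowerable j (is!p) then \<omega> (lw j (is!p) # dl p is) x else 0))"
      proof (intro lined_sum finite_lessThan lined_mult lined_const)
        fix p show "lined (\<lambda>x. if lowerable j (is!p) then \<omega> (lw j (is!p) # dl p is) x else 0)"
          by (cases "lowerable j (is!p)") (simp_all add: lin lined_const)
      qed
      have l3: "lined (\<lambda>x. (-1)^p * (if lowerable j (is!p) then \<omega> (lw j (is!p) # dl p is) x else 0))" for p
      proof (intro lined_mult lined_const)
        show "lined (\<lambda>x. if lowerable j (is!p) then \<omega> (lw j (is!p) # dl p is) x else 0)"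
          by (cases "lowerable j (is!p)") (simp_all add: lin lined_const)
      qed
      have "pd a (lieF N j \<omega> is) x = pd a (\<lambda>x. \<Sum>m\<in>MN N. x (rs j m) * pd m (\<omega> is) x) x +
          pd a (\<lambda>x. \<Sum>p<length is. (-1)^p * (if lowerable j (is!p) then \<omega> (lw j (is!p) # dl p is) x else 0)) x"
        unfolding lieF_def by (rule pd_add[OF l1 l2 x])
      also have "\<dots> = ?rhs"
        by (simp only: pd_sum[OF finite_MN _ x] pd_sum[OF finite_lessThan _ x] lined_mult lined_coord linp l3)
      finally show ?thesis .
    qed
    also have "\<dots> = G x"
    proof -
      have "pd a (\<lambda>x. x (rs j m) * pd m (\<omega> is) x) x = (if a = rs j m then 1 else 0) * pd m (\<omega> is) x" for m
        using pd_mult[OF lined_coord linp x, of a "rs j m" m "is"] pd_dep_high[OF dep_pd[OF assms(4) d] hi x]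
        by (simp add: pd_coord)
      moreover have "pd a (\<lambda>x. (-1)^p * (if lowerable j (is!p) then \<omega> (lw j (is!p) # dl p is) x else 0)) x = 0" for p
        by (cases "lowerable j (is!p)") (simp_all add: pd_cmult[OF lin x] pd_dep_high[OF d hi x] pd_const)
      ultimately show ?thesis by (simp add: G_def)
    qed
    finally show "G x = pd a (lie (Tvf j) \<omega> is) x" by simp
  qed
  ultimately show ?thesis using dep_cong assms(4) by blast
qed


subsection \<open>exterior derivative\<close>

lemma dform_fD: "fD \<omega> \<Longrightarrow> fD (dform \<omega>)"
  unfolding fD_def
proof
  fix "is" assume "\<forall>is. Dsm (\<omega> is)"
  then have "Dsm (\<lambda>x. \<Sum>p<length is. (-1)^p * pd (is!p) (\<omega> (dl p is)) x)"
    by (intro Dsm_sum Dsm_cmult Dsm_pd) auto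
  moreover have "dform \<omega> is = (\<lambda>x. \<Sum>p<length is. (-1)^p * pd (is!p) (\<omega> (dl p is)) x)"
    by (simp add: fun_eq_iff dform_eq)
  ultimately show "Dsm (dform \<omega> is)" by simp
qed

lemma dform_supp: assumes "\<And>js c x. x \<in> U \<Longrightarrow> s < wt js + jord c \<Longrightarrow> pd c (\<omega> js) x = 0"
  shows "supp s (dform \<omega>)"
  unfolding supp_def
proof (intro allI ballI impI)
  fix "is" x assume x: "x \<in> U" and w: "s < wt is"
  have "pd (is!p) (\<omega> (dl p is)) x = 0" if "p < length is" for p
    using assms[OF x] wt_dl[OF that] w by simp
  then show "dform \<omega> is x = 0" by (simp add: dform_eq)
qed

lemma dform_depw: assumes "\<And>js c. w \<le> wt js + jord c \<Longrightarrow> dep k (pd c (\<omega> js))"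
  shows "depw w k (dform \<omega>)"
  unfolding depw_def
proof (intro allI impI)
  fix "is" assume w: "w \<le> wt is"
  have "dep k (\<lambda>x. \<Sum>p<length is. (-1)^p * pd (is!p) (\<omega> (dl p is)) x)"
    using assms wt_dl w by (intro dep_sum dep_cmult) auto
  moreover have "dform \<omega> is = (\<lambda>x. \<Sum>p<length is. (-1)^p * pd (is!p) (\<omega> (dl p is)) x)"
    by (simp add: fun_eq_iff dform_eq)
  ultimately show "dep k (dform \<omega> is)" by simp
qed

subsection \<open>the Lagrangian\<close>

lemma fn0_eq: "fn0 L js = (if js = [] then L else (\<lambda>_. 0))"
  by (auto simp: fn0_def fun_eq_iff)

lemma L_Dsm: "smooth_on U L \<Longrightarrow> Dsm L"
  unfolding smooth_on_def Dsm_def lined_def by blast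

lemma L_dep: "fun_on 2 L \<Longrightarrow> dep 2 L"
  unfolding fun_on_def dep_def by blast

lemma dL_props: assumes "fun_on 2 L" "smooth_on U L"
  shows "fD (dform (fn0 L)) \<and> supp 2 (dform (fn0 L)) \<and> depw 0 2 (dform (fn0 L))"
proof (intro conjI)
  show "fD (dform (fn0 L))"
    using L_Dsm[OF assms(2)] by (intro dform_fD) (simp add: fD_def fn0_eq Dsm_const)
  show "supp 2 (dform (fn0 L))"
  proof (rule dform_supp)
    fix js and c :: "'a idx" and x assume x: "x \<in> U" and w: "2 < wt js + jord c"
    show "pd c (fn0 L js) x = 0"
    proof (cases "js = []")
      case True
      then show ?thesis using pd_dep_high[OF L_dep[OF assms(1)] _ x] w by (simp add: fn0_eq wt_def)
    qed (simp add: fn0_eq pd_const)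
  qed
  show "depw 0 2 (dform (fn0 L))"
    by (rule dform_depw) (auto simp: fn0_eq pd_const dep_const intro: dep_pd L_dep[OF assms(1)])
qed

definition depd :: "nat \<Rightarrow> 'a form \<Rightarrow> bool" where
  "depd k \<omega> \<longleftrightarrow> (\<forall>is a. jord a = Suc k \<longrightarrow> dep k (pd a (\<omega> is)))"

lemma theta_props: assumes "fun_on 2 L" "smooth_on U L"
  shows "fD (hilbert L i) \<and> supp 1 (hilbert L i) \<and> depw 0 3 (hilbert L i) \<and> depw 1 2 (hilbert L i)
     \<and> depd 2 (hilbert L i)"
proof -
  let ?dL = "dform (fn0 L)"
  have dL: "fD ?dL" "supp 2 ?dL" "depw 0 2 ?dL" using dL_props[OF assms] by auto
  have S: "fD (Sform i ?dL)" "supp 1 (Sform i ?dL)" "depw 0 2 (Sform i ?dL)"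
    using dL by (auto intro: Sform_fD Sform_depw0 Sform_supp simp: numeral_2_eq_2)
  have SS: "fD (Sform j (Sform i ?dL))" "supp 0 (Sform j (Sform i ?dL))" "depw 0 2 (Sform j (Sform i ?dL))" for j
    using S by (auto intro: Sform_fD Sform_depw0 Sform_supp)
  have SS2: "supp 2 (Sform j (Sform i ?dL))" for j using supp_mono[OF SS(2), of 2] by simp
  have Lj: "fD (lie (Tvf j) (Sform j (Sform i ?dL)))" "supp 1 (lie (Tvf j) (Sform j (Sform i ?dL)))"
       "depw 0 3 (lie (Tvf j) (Sform j (Sform i ?dL)))" "depw 1 2 (lie (Tvf j) (Sform j (Sform i ?dL)))"
       "depd 2 (lie (Tvf j) (Sform j (Sform i ?dL)))" for j
  proof -
    show "fD (lie (Tvf j) (Sform j (Sform i ?dL)))" using lie_fD[OF SS(1) SS2 SS(3)] .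
    show "supp 1 (lie (Tvf j) (Sform j (Sform i ?dL)))" using lie_supp[OF SS(1) SS2 SS(3) SS(2)] by simp
    show "depw 0 3 (lie (Tvf j) (Sform j (Sform i ?dL)))" using lie_dep[OF SS(1) SS2 SS(3)] by (simp add: numeral_3_eq_3)
    show "depw 1 2 (lie (Tvf j) (Sform j (Sform i ?dL)))" using lie_depw_high[OF SS(1) SS2 SS(3) SS(2) SS(3)] by simp
    show "depd 2 (lie (Tvf j) (Sform j (Sform i ?dL)))"
      unfolding depd_def using lie_depd[OF SS(1) SS2 SS(3)] by (simp add: numeral_3_eq_3)
  qed
  have heq: "hilbert L i is = (\<lambda>x. Sform i ?dL is x - 1/2 * (lie (Tvf 1) (Sform 1 (Sform i ?dL)) is x
      + lie (Tvf 2) (Sform 2 (Sform i ?dL)) is x))" for "is"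
    by (simp add: hilbert_def fun_eq_iff)
  have F1: "fD (hilbert L i)" unfolding fD_def heq
    using S(1) Lj(1)[of 1] Lj(1)[of 2] unfolding fD_def by (intro allI Dsm_diff Dsm_cmult Dsm_add) auto
  have F2: "supp 1 (hilbert L i)" unfolding supp_def heq
    using S(2) Lj(2)[of 1] Lj(2)[of 2] unfolding supp_def by auto
  have s3: "dep 3 (Sform i ?dL is)" for "is" using S(3) dep_mono[of 2 _ 3] unfolding depw_def by simp
  have F3: "depw 0 3 (hilbert L i)" unfolding depw_def heq
    using s3 Lj(3)[of 1] Lj(3)[of 2] unfolding depw_def
    by (intro allI impI dep_diff dep_cmult dep_add) simp_all
  have F4: "depw 1 2 (hilbert L i)" unfolding depw_def heq
    using S(3) Lj(4)[of 1] Lj(4)[of 2] unfolding depw_def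
    by (intro allI impI dep_diff dep_cmult dep_add) simp_all
  have F5: "depd 2 (hilbert L i)" unfolding depd_def
  proof (intro allI impI)
    fix "is" and a :: "'a idx" assume a: "jord a = Suc 2"
    let ?f = "Sform i ?dL is" and ?g1 = "lie (Tvf 1) (Sform 1 (Sform i ?dL)) is"
      and ?g2 = "lie (Tvf 2) (Sform 2 (Sform i ?dL)) is"
    have lf: "lined ?f" "lined ?g1" "lined ?g2"
      using S(1) Lj(1)[of 1] Lj(1)[of 2] Dsm_lined unfolding fD_def by blast+
    have d1: "dep 2 (pd a ?g1)" "dep 2 (pd a ?g2)" using Lj(5)[of 1] Lj(5)[of 2] a unfolding depd_def by blast+
    have "eqU (\<lambda>x. - (1/2) * (pd a ?g1 x + pd a ?g2 x)) (pd a (hilbert L i is))"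
      unfolding eqU_def heq
    proof
      fix x assume x: "x \<in> U"
      have z: "pd a ?f x = 0"
        using pd_dep_high[OF _ _ x, of 2 ?f a] S(3) a unfolding depw_def by simp
      have e1: "pd a (\<lambda>x. ?f x - 1/2 * (?g1 x + ?g2 x)) x = pd a ?f x - pd a (\<lambda>x. 1/2 * (?g1 x + ?g2 x)) x"
        using pd_diff[OF lf(1) lined_mult[OF lined_const lined_add[OF lf(2,3)]] x] .
      have e2: "pd a (\<lambda>x. 1/2 * (?g1 x + ?g2 x)) x = 1/2 * (pd a ?g1 x + pd a ?g2 x)"
      proof -
        have t1: "pd a (\<lambda>x. 1/2 * (?g1 x + ?g2 x)) x = 1/2 * pd a (\<lambda>x. ?g1 x + ?g2 x) x"
          by (rule pd_cmult[OF lined_add[OF lf(2,3)] x])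
        have t2: "pd a (\<lambda>x. ?g1 x + ?g2 x) x = pd a ?g1 x + pd a ?g2 x"
          by (rule pd_add[OF lf(2,3) x])
        show ?thesis by (simp only: t1 t2)
      qed
      show "- (1/2) * (pd a ?g1 x + pd a ?g2 x) = pd a (\<lambda>x. ?f x - 1/2 * (?g1 x + ?g2 x)) x"
        using e1 e2 z by simp
    qed
    moreover have "dep 2 (\<lambda>x. - (1/2) * (pd a ?g1 x + pd a ?g2 x))"
      using d1 by (intro dep_cmult dep_add)
    ultimately show "dep 2 (pd a (hilbert L i is))" using dep_cong by blast
  qed
  show ?thesis using F1 F2 F3 F4 F5 by blast
qed

lemma dtheta_props: assumes "fun_on 2 L" "smooth_on U L"
  shows "fD (dform (hilbert L i)) \<and> supp 3 (dform (hilbert L i)) \<and> depw 0 3 (dform (hilbert L i))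
     \<and> depw 3 2 (dform (hilbert L i))"
proof -
  let ?t = "hilbert L i"
  have T: "fD ?t" "supp 1 ?t" "depw 0 3 ?t" "depw 1 2 ?t" "depd 2 ?t" using theta_props[OF assms] by auto
  have z: "eqU (?t js) (\<lambda>_. 0)" if "2 \<le> wt js" for js
    using T(2) that unfolding supp_def eqU_def by auto
  have d3: "dep 3 (?t js)" for js using T(3) unfolding depw_def by auto
  have d2: "dep 2 (?t js)" if "1 \<le> wt js" for js using T(4) that unfolding depw_def by auto
  show ?thesis
  proof (intro conjI)
    show "fD (dform ?t)" using dform_fD[OF T(1)] .
    show "supp 3 (dform ?t)"
    proof (rule dform_supp)
      fix js and c :: "'a idx" and x assume x: "x \<in> U" and w: "3 < wt js + jord c"
      consider "2 \<le> wt js" | "wt js = 1" | "wt js = 0" by linarith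
      then show "pd c (?t js) x = 0"
      proof cases
        case 1 then show ?thesis using pd_zero[OF z x] by blast
      next
        case 2 then show ?thesis using pd_dep_high[OF d2 _ x] w by simp
      next
        case 3 then show ?thesis using pd_dep_high[OF d3 _ x] w by simp
      qed
    qed
    show "depw 0 3 (dform ?t)" by (rule dform_depw) (auto intro: dep_pd d3)
    show "depw 3 2 (dform ?t)"
    proof (rule dform_depw)
      fix js and c :: "'a idx" assume w: "3 \<le> wt js + jord c"
      have zz: "eqU (pd c (?t js)) (\<lambda>_. 0) \<Longrightarrow> dep 2 (pd c (?t js))" by (rule dep_zeroU) simp
      consider "2 \<le> wt js" | "wt js = 1" | "wt js = 0 \<and> jord c = 3" | "wt js = 0 \<and> 3 < jord c" using w by linarith
      then show "dep 2 (pd c (?t js))"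
      proof cases
        case 1 then show ?thesis using zz pd_zero[OF z] eqU_def by blast
      next
        case 2 then show ?thesis using dep_pd d2 by simp
      next
        case 3
        then have "jord c = Suc 2" by simp
        then show ?thesis using T(5) unfolding depd_def by blast
      next
        case 4 then show ?thesis using zz pd_dep_high[OF d3] eqU_def by blast
      qed
    qed
  qed
qed

lemma Pop_props: assumes "fD \<omega>" "supp 3 \<omega>" "depw 0 3 \<omega>" "depw 3 2 \<omega>"
  shows "supp 2 (Pop i \<omega>) \<and> depw 0 4 (Pop i \<omega>)"
proof -
  have A: "supp 2 (Sform i \<omega>)" "depw 0 3 (Sform i \<omega>)"
    using assms by (auto intro: Sform_depw0 Sform_supp simp: numeral_3_eq_3 numeral_2_eq_2)
  have X: "fD (Sform j (Sform i \<omega>))" "supp 1 (Sform j (Sform i \<omega>))" "depw 0 3 (Sform j (Sform i \<omega>))" for j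
    using assms by (auto intro!: Sform_fD Sform_depw0 Sform_supp simp: numeral_3_eq_3 numeral_2_eq_2)
  have X3: "supp 3 (Sform j (Sform i \<omega>))" for j using supp_mono[OF X(2), of 3] by simp
  have B: "supp 2 (lie (Tvf j) (Sform j (Sform i \<omega>)))" "depw 0 4 (lie (Tvf j) (Sform j (Sform i \<omega>)))" for j
    using lie_supp[OF X(1) X3 X(3) X(2)] lie_dep[OF X(1) X3 X(3)]
    by (simp_all add: numeral_2_eq_2 numeral_3_eq_3 eval_nat_numeral)
  let ?Y = "\<lambda>j k. Sform j (Sform k (Sform i \<omega>))"
  have Y: "fD (?Y j k)" "supp 0 (?Y j k)" "depw 0 2 (?Y j k)" for j k
  proof -
    show "fD (?Y j k)" using assms(1) by (intro Sform_fD)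
    show "supp 0 (?Y j k)" using assms(2) by (intro Sform_supp) (simp add: numeral_3_eq_3)
    have "depw (Suc 2) 2 \<omega>" using assms(4) by simp
    then have "depw 2 2 (Sform i \<omega>)" by (rule Sform_depw)
    then have "depw (Suc 1) 2 (Sform i \<omega>)" by (simp add: numeral_2_eq_2)
    then have "depw 1 2 (Sform k (Sform i \<omega>))" by (rule Sform_depw)
    then have "depw (Suc 0) 2 (Sform k (Sform i \<omega>))" by simp
    then show "depw 0 2 (?Y j k)" by (rule Sform_depw)
  qed
  have Y2: "supp 2 (?Y j k)" for j k using supp_mono[OF Y(2), of 2] by simp
  let ?Z = "\<lambda>j k. lie (Tvf k) (?Y j k)"
  have Z: "fD (?Z j k)" "supp 1 (?Z j k)" "depw 0 3 (?Z j k)" for j k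
    using lie_fD[OF Y(1) Y2 Y(3)] lie_supp[OF Y(1) Y2 Y(3) Y(2)] lie_dep[OF Y(1) Y2 Y(3)]
    by (simp_all add: numeral_3_eq_3)
  have Z3: "supp 3 (?Z j k)" for j k using supp_mono[OF Z(2), of 3] by simp
  have C: "supp 2 (lie (Tvf j) (?Z j k))" "depw 0 4 (lie (Tvf j) (?Z j k))" for j k
    using lie_supp[OF Z(1) Z3 Z(3) Z(2)] lie_dep[OF Z(1) Z3 Z(3)]
    by (simp_all add: numeral_2_eq_2 numeral_3_eq_3 eval_nat_numeral)
  have peq: "Pop i \<omega> is = (\<lambda>x. 1/4 * Sform i \<omega> is x
      - 1/24 * (\<Sum>j\<in>{1,2}. lie (Tvf j) (Sform j (Sform i \<omega>)) is x)
      + 1/192 * (\<Sum>j\<in>{1,2}. \<Sum>k\<in>{1,2}. lie (Tvf j) (?Z j k) is x))" for "is"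
    by (simp add: Pop_def fun_eq_iff)
  have P1: "supp 2 (Pop i \<omega>)"
    unfolding supp_def peq using A(1) B(1) C(1) unfolding supp_def by simp
  have a4: "dep 4 (Sform i \<omega> is)" for "is" using A(2) dep_mono[of 3 _ 4] unfolding depw_def by simp
  have P2: "depw 0 4 (Pop i \<omega>)"
    unfolding depw_def peq using a4 B(2) C(2) unfolding depw_def
    by (intro allI impI dep_add dep_diff dep_cmult dep_sum) simp_all
  show ?thesis using P1 P2 by blast
qed

lemma Theta_props: assumes "fun_on 2 L" "smooth_on U L"
  shows "supp 2 (fundamental_form L) \<and> depw 0 4 (fundamental_form L)"
proof -
  have P: "supp 2 (Pop j (dform (hilbert L i))) \<and> depw 0 4 (Pop j (dform (hilbert L i)))" for i j
    using dtheta_props[OF assms, of i] by (intro Pop_props) auto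
  have feq: "fundamental_form L is = (\<lambda>x. Pop 2 (dform (hilbert L 1)) is x - Pop 1 (dform (hilbert L 2)) is x)" for "is"
    by (simp add: fundamental_form_def fun_eq_iff)
  show ?thesis
  proof
    show "supp 2 (fundamental_form L)" using P unfolding supp_def feq by simp
    show "depw 0 4 (fundamental_form L)" using P unfolding depw_def feq by (auto intro: dep_diff)
  qed
qed

end

theorem theorem4:
  fixes U :: "('a::finite) pt set" and L :: "'a pt \<Rightarrow> real"
  assumes "open_in_frames 2 U"
    and "fun_on 2 L"
    and "smooth_on U L"
    and "homogeneous U L"
  shows "projectable_to 4 U (fundamental_form L) \<and> horizontal_over 2 5 U (fundamental_form L)"
proof -
  interpret frm U using assms(1) unfolding open_in_frames_def by unfold_locales auto
  have T: "supp 2 (fundamental_form L)" "depw 0 4 (fundamental_form L)"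
    using Theta_props[OF assms(2,3)] by auto
  have wtm: "jord m \<le> wt is" if "m \<in> set is" for m :: "'a idx" and "is"
    unfolding wt_def using that by (simp add: member_le_sum_list)
  show ?thesis
  proof
    show "projectable_to 4 U (fundamental_form L)"
      unfolding projectable_to_def
    proof (intro conjI ballI allI impI)
      fix x and "is" :: "'a idx list" assume x: "x \<in> U" and "\<exists>m\<in>set is. 4 < jord m"
      then obtain m where "m \<in> set is" "4 < jord m" by blast
      then have "2 < wt is" using wtm by fastforce
      then show "fundamental_form L is x = 0" using T(1) x unfolding supp_def by blast
    next
      fix x y "is" assume x: "x \<in> U" and "agree_upto 4 x y"
      then show "fundamental_form L is x = fundamental_form L is y"
        using T(2) unfolding depw_def dep_def by blast
    qed
    show "horizontal_over 2 5 U (fundamental_form L)"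
      unfolding horizontal_over_def
    proof (intro allI impI ballI)
      fix X :: "'a vf" and x "is"
      assume X: "\<forall>m x. jord m \<le> 2 \<or> 5 < jord m \<longrightarrow> X m x = 0" and x: "x \<in> U"
      have "(\<lambda>m. X m x * fundamental_form L (m # is) x) = (\<lambda>_. 0)"
      proof
        fix m
        show "X m x * fundamental_form L (m # is) x = 0"
        proof (cases "jord m \<le> 2")
          case True then have "X m x = 0" using X by blast
          then show ?thesis by simp
        next
          case False
          then have "2 < wt (m # is)" by (simp add: wt_cons)
          then show ?thesis using T(1) x unfolding supp_def by simp
        qed
      qed
      then have "Sum_any (\<lambda>m. X m x * fundamental_form L (m # is) x) = Sum_any (\<lambda>_::'a idx. 0::real)"
        by (rule arg_cong)
      also have "\<dots> = 0" by (simp add: Sum_any.expand_set)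
      finally show "ctr X (fundamental_form L) is x = 0" unfolding ctr_def .
    qed
  qed
qed

end
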